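(* Let $P$ be a subgroup of $I_K(\mathfrak{n})$ with $P_{K,1}(\mathfrak{n})\subseteq P\subseteq P_K(\mathfrak{n})$ and let $\Gamma$ be a subgroup of $\mathrm{SL}_2(\mathbb{Z})$. The map $\phi_\Gamma:\mathcal{Q}_N(d_K)/\sim_\Gamma\to I_K(\mathfrak{n})/P$, $[Q]\mapsto[[\omega_Q,1]]$, is well defined and injective if and only if $\Gamma$ satisfies property (P): for every $Q\in\mathcal{Q}_N(d_K)$ and every $\gamma\in\mathrm{SL}_2(\mathbb{Z})$ with $Q^{\gamma^{-1}}\in\mathcal{Q}_N(d_K)$, one has $j(\gamma,\omega_Q)\mathcal{O}_K\in P$ if and only if $\gamma\in\Gamma\cdot I_{\omega_Q}$.
   Context: Let $K$ be an imaginary quadratic field with discriminant $d_K$ and ring of integers $\mathcal{O}_K$. Let $N$ be a positive integer and $\mathfrak{n}=N\mathcal{O}_K$. $I_K(\mathfrak{n})$ denotes the group of fractional ideals of $K$ relatively prime to $\mathfrak{n}$, $P_K(\mathfrak{n})$ its subgroup of principal fractional ideals, and $P_{K,1}(\mathfrak{n})=\{\nu\mathcal{O}_K:\nu\in K^*,\ \nu\equiv^*1\pmod{\mathfrak{n}}\}$, where $\equiv^*$ is multiplicative congruence. $\mathcal{Q}(d_K)$ is the set of primitive positive definite binary quadratic forms $ax^2+bxy+cy^2\in\mathbb{Z}[x,y]$ with $b^2-4ac=d_K$, and $\mathcal{Q}_N(d_K)=\{ax^2+bxy+cy^2\in\mathcal{Q}(d_K):\gcd(N,a)=1\}$. For $Q=ax^2+bxy+cy^2\in\mathcal{Q}(d_K)$,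 $\omega_Q=(-b+\sqrt{d_K})/(2a)\in\mathbb{H}$ and $[\omega_Q,1]=\mathbb{Z}\omega_Q+\mathbb{Z}$ (a fractional ideal of $K$). For $\gamma\in\mathrm{SL}_2(\mathbb{Z})$, $Q^\gamma(x,y)=Q(\gamma\,(x,y)^T)$. For a subgroup $\Gamma\subseteq\mathrm{SL}_2(\mathbb{Z})$, the relation $\sim_\Gamma$ on $\mathcal{Q}_N(d_K)$ is: $Q\sim_\Gamma Q'$ iff $Q'=Q^\gamma$ for some $\gamma\in\Gamma$. For $\gamma=\begin{bmatrix}a&b\\c&d\end{bmatrix}\in\mathrm{SL}_2(\mathbb{Z})$ and $\tau\in\mathbb{H}$, $j(\gamma,\tau)=c\tau+d$. $I_{\omega}$ denotes the isotropy subgroup of $\omega\in\mathbb{H}$ in $\mathrm{SL}_2(\mathbb{Z})$ under the action by fractional linear transformations. *)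

theory Defs
  imports "HOL-Analysis.Analysis" "HOL-Computational_Algebra.Squarefree"
begin

definition fund_disc_neg :: "int \<Rightarrow> bool" where
  "fund_disc_neg d \<longleftrightarrow> d < 0 \<and>
     ((d mod 4 = 1 \<and> squarefree d) \<or>
      (\<exists>m. d = 4 * m \<and> (m mod 4 = 2 \<or> m mod 4 = 3) \<and> squarefree m))"

text \<open>sqrt(d_K) with the convention that it lies in the upper half plane.\<close>
definition sqrt_disc :: "int \<Rightarrow> complex" where
  "sqrt_disc d = \<i> * complex_of_real (sqrt (real_of_int (- d)))"

definition Kfield :: "int \<Rightarrow> complex set" where
  "Kfield d = {of_real q1 + of_real q2 * sqrt_disc d | q1 q2. q1 \<in> \<rat> \<and> q2 \<in> \<rat>}"

definition OK :: "int \<Rightarrow> complex set" where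
  "OK d = {of_int m + of_int n * ((of_int d + sqrt_disc d) / 2) | m n. True}"

definition ideal_mult :: "complex set \<Rightarrow> complex set \<Rightarrow> complex set" where
  "ideal_mult A B = {x. \<exists>(n::nat) f g. (\<forall>i<n. f i \<in> A \<and> g i \<in> B) \<and> x = (\<Sum>i<n. f i * g i)}"

definition ideal_add :: "complex set \<Rightarrow> complex set \<Rightarrow> complex set" where
  "ideal_add A B = {x + y | x y. x \<in> A \<and> y \<in> B}"

definition frac_ideal :: "int \<Rightarrow> complex set \<Rightarrow> bool" where
  "frac_ideal d A \<longleftrightarrow> A \<subseteq> Kfield d \<and> 0 \<in> A \<and> A \<noteq> {0} \<and>
     (\<forall>x\<in>A. \<forall>y\<in>A. x + y \<in> A) \<and> (\<forall>r\<in>OK d. \<forall>x\<in>A. r * x \<in> A) \<and>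
     (\<exists>c\<in>OK d. c \<noteq> 0 \<and> (\<forall>x\<in>A. c * x \<in> OK d))"

definition integral_ideal :: "int \<Rightarrow> complex set \<Rightarrow> bool" where
  "integral_ideal d A \<longleftrightarrow> frac_ideal d A \<and> A \<subseteq> OK d"

text \<open>The ideal n = N O_K.\<close>
definition modulus_ideal :: "int \<Rightarrow> nat \<Rightarrow> complex set" where
  "modulus_ideal d N = {of_nat N * x | x. x \<in> OK d}"

definition principal_ideal :: "int \<Rightarrow> complex \<Rightarrow> complex set" where
  "principal_ideal d \<nu> = {\<nu> * x | x. x \<in> OK d}"

definition integral_coprime :: "int \<Rightarrow> nat \<Rightarrow> complex set \<Rightarrow> bool" where
  "integral_coprime d N B \<longleftrightarrow> integral_ideal d B \<and> ideal_add B (modulus_ideal d N) = OK d"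

text \<open>I_K(n): fractional ideals relatively prime to n, i.e. quotients B C^{-1} of integral
  ideals B, C relatively prime to n.\<close>
definition IK :: "int \<Rightarrow> nat \<Rightarrow> complex set set" where
  "IK d N = {A. frac_ideal d A \<and>
     (\<exists>B C. integral_coprime d N B \<and> integral_coprime d N C \<and> ideal_mult A C = B)}"

definition PK :: "int \<Rightarrow> nat \<Rightarrow> complex set set" where
  "PK d N = {principal_ideal d \<nu> | \<nu>. \<nu> \<in> Kfield d \<and> \<nu> \<noteq> 0 \<and> principal_ideal d \<nu> \<in> IK d N}"

definition mult_cong_one :: "int \<Rightarrow> nat \<Rightarrow> complex \<Rightarrow> bool" where
  "mult_cong_one d N \<nu> \<longleftrightarrow> (\<exists>\<alpha>\<in>OK d. \<exists>\<beta>\<in>OK d. \<alpha> \<noteq> 0 \<and> \<beta> \<noteq> 0 \<and>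
      integral_coprime d N (principal_ideal d \<alpha>) \<and> integral_coprime d N (principal_ideal d \<beta>) \<and>
      \<nu> = \<alpha> / \<beta> \<and> \<alpha> - \<beta> \<in> modulus_ideal d N)"

definition PK1 :: "int \<Rightarrow> nat \<Rightarrow> complex set set" where
  "PK1 d N = {principal_ideal d \<nu> | \<nu>. \<nu> \<in> Kfield d \<and> \<nu> \<noteq> 0 \<and> mult_cong_one d N \<nu>}"

definition ideal_subgroup :: "int \<Rightarrow> nat \<Rightarrow> complex set set \<Rightarrow> bool" where
  "ideal_subgroup d N P \<longleftrightarrow> P \<subseteq> IK d N \<and> OK d \<in> P \<and>
     (\<forall>A\<in>P. \<forall>B\<in>P. ideal_mult A B \<in> P) \<and> (\<forall>A\<in>P. \<exists>B\<in>P. ideal_mult A B = OK d)"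

definition same_class :: "complex set set \<Rightarrow> complex set \<Rightarrow> complex set \<Rightarrow> bool" where
  "same_class P A B \<longleftrightarrow> (\<exists>C\<in>P. A = ideal_mult C B)"

section \<open>SL_2(Z): a matrix [[p,q],[r,s]] is the tuple (p,q,r,s)\<close>

type_synonym mat2 = "int \<times> int \<times> int \<times> int"

definition SL2Z :: "mat2 set" where
  "SL2Z = {(p, q, r, s). p * s - q * r = 1}"

definition mat_mult :: "mat2 \<Rightarrow> mat2 \<Rightarrow> mat2" where
  "mat_mult = (\<lambda>(p, q, r, s) (p', q', r', s').
     (p * p' + q * r', p * q' + q * s', r * p' + s * r', r * q' + s * s'))"

text \<open>Inverse of a determinant-one matrix.\<close>
definition mat_inv :: "mat2 \<Rightarrow> mat2" where
  "mat_inv = (\<lambda>(p, q, r, s). (s, - q, - r, p))"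

definition mat_id :: mat2 where "mat_id = (1, 0, 0, 1)"

definition SL2_subgroup :: "mat2 set \<Rightarrow> bool" where
  "SL2_subgroup G \<longleftrightarrow> G \<subseteq> SL2Z \<and> mat_id \<in> G \<and>
     (\<forall>x\<in>G. \<forall>y\<in>G. mat_mult x y \<in> G) \<and> (\<forall>x\<in>G. mat_inv x \<in> G)"

definition moebius :: "mat2 \<Rightarrow> complex \<Rightarrow> complex" where
  "moebius = (\<lambda>(p, q, r, s) \<tau>. (of_int p * \<tau> + of_int q) / (of_int r * \<tau> + of_int s))"

definition jfac :: "mat2 \<Rightarrow> complex \<Rightarrow> complex" where
  "jfac = (\<lambda>(p, q, r, s) \<tau>. of_int r * \<tau> + of_int s)"

definition isotropy :: "complex \<Rightarrow> mat2 set" where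
  "isotropy \<omega> = {\<gamma> \<in> SL2Z. moebius \<gamma> \<omega> = \<omega>}"

definition set_mult :: "mat2 set \<Rightarrow> mat2 set \<Rightarrow> mat2 set" where
  "set_mult G H = {mat_mult g h | g h. g \<in> G \<and> h \<in> H}"

section \<open>Binary quadratic forms a x^2 + b x y + c y^2 as triples (a,b,c)\<close>

type_synonym qform = "int \<times> int \<times> int"

definition Qforms :: "int \<Rightarrow> qform set" where
  "Qforms d = {(a, b, c). b^2 - 4 * a * c = d \<and> a > 0 \<and> gcd a (gcd b c) = 1}"

definition QformsN :: "int \<Rightarrow> nat \<Rightarrow> qform set" where
  "QformsN d N = {(a, b, c) \<in> Qforms d. gcd (int N) a = 1}"

text \<open>Q^gamma(x,y) = Q(p x + q y, r x + s y), coefficients written out.\<close>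
definition qform_act :: "qform \<Rightarrow> mat2 \<Rightarrow> qform" where
  "qform_act = (\<lambda>(a, b, c) (p, q, r, s).
     (a * p^2 + b * p * r + c * r^2,
      2 * a * p * q + b * (p * s + q * r) + 2 * c * r * s,
      a * q^2 + b * q * s + c * s^2))"

definition omegaQ :: "int \<Rightarrow> qform \<Rightarrow> complex" where
  "omegaQ d = (\<lambda>(a, b, c). (- of_int b + sqrt_disc d) / (2 * of_int a))"

definition lattice1 :: "complex \<Rightarrow> complex set" where
  "lattice1 \<omega> = {of_int m * \<omega> + of_int n | m n. True}"

definition form_equiv :: "int \<Rightarrow> nat \<Rightarrow> mat2 set \<Rightarrow> qform \<Rightarrow> qform \<Rightarrow> bool" where
  "form_equiv d N G Q Q' \<longleftrightarrow> Q \<in> QformsN d N \<and> Q' \<in> QformsN d N \<and> (\<exists>\<gamma>\<in>G. Q' = qform_act Q \<gamma>)"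

definition phi_well_defined :: "int \<Rightarrow> nat \<Rightarrow> complex set set \<Rightarrow> mat2 set \<Rightarrow> bool" where
  "phi_well_defined d N P G \<longleftrightarrow>
     (\<forall>Q\<in>QformsN d N. lattice1 (omegaQ d Q) \<in> IK d N) \<and>
     (\<forall>Q Q'. form_equiv d N G Q Q' \<longrightarrow>
         same_class P (lattice1 (omegaQ d Q)) (lattice1 (omegaQ d Q')))"

definition phi_injective :: "int \<Rightarrow> nat \<Rightarrow> complex set set \<Rightarrow> mat2 set \<Rightarrow> bool" where
  "phi_injective d N P G \<longleftrightarrow>
     (\<forall>Q\<in>QformsN d N. \<forall>Q'\<in>QformsN d N.
        same_class P (lattice1 (omegaQ d Q)) (lattice1 (omegaQ d Q')) \<longrightarrow> form_equiv d N G Q Q')"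

definition property_P :: "int \<Rightarrow> nat \<Rightarrow> complex set set \<Rightarrow> mat2 set \<Rightarrow> bool" where
  "property_P d N P G \<longleftrightarrow>
     (\<forall>Q\<in>QformsN d N. \<forall>\<gamma>\<in>SL2Z. qform_act Q (mat_inv \<gamma>) \<in> QformsN d N \<longrightarrow>
        (principal_ideal d (jfac \<gamma> (omegaQ d Q)) \<in> P \<longleftrightarrow>
         \<gamma> \<in> set_mult G (isotropy (omegaQ d Q))))"

end

theory Submission
  imports Defs
begin

lemma sqrt_disc_sq: "d \<le> 0 \<Longrightarrow> (sqrt_disc d)^2 = of_int d"
proof -
  assume "d \<le> 0"
  hence "(sqrt (real_of_int (-d)))^2 = real_of_int (-d)" by simp
  hence "(complex_of_real (sqrt (real_of_int (-d))))^2 = complex_of_real (real_of_int (-d))"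
    by (metis of_real_power)
  thus ?thesis unfolding sqrt_disc_def by (simp add: power_mult_distrib)
qed

lemma Im_sqrt_disc: "Im (sqrt_disc d) = sqrt (real_of_int (-d))" "Re (sqrt_disc d) = 0"
  by (simp_all add: sqrt_disc_def)

definition theta :: "int \<Rightarrow> complex" where "theta d = (of_int d + sqrt_disc d) / 2"

lemma OK_mem: "x \<in> OK d \<longleftrightarrow> (\<exists>m n. x = of_int m + of_int n * theta d)"
  by (auto simp: OK_def theta_def)

lemma theta_sq:
  assumes "d \<le> 0" "d mod 4 = 0 \<or> d mod 4 = 1"
  shows "(theta d)^2 = of_int d * theta d + of_int ((d - d^2) div 4)"
proof -
  have dv: "4 dvd (d - d^2)"
  proof -
    obtain k where k: "d = 4*k + d mod 4" by (metis mod_mult_div_eq add.commute mult.commute)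
    show ?thesis using assms(2)
    proof
      assume "d mod 4 = 0" then have "d - d^2 = 4 * (k - 4*k^2)" using k by (simp add: power2_eq_square algebra_simps)
      thus ?thesis by simp
    next
      assume "d mod 4 = 1" then have "d - d^2 = 4 * (- k - 4*k^2)" using k by (simp add: power2_eq_square algebra_simps)
      thus ?thesis by simp
    qed
  qed
  have e: "of_int ((d - d^2) div 4) = (of_int d - of_int d ^2) / (4::complex)"
  proof -
    obtain k where k: "d - d^2 = 4 * k" using dv by blast
    hence "(d - d^2) div 4 = k" by simp
    moreover have "(of_int d - of_int d ^2 :: complex) = 4 * of_int k"
      using arg_cong[OF k, of "of_int :: int \<Rightarrow> complex"] by simp
    ultimately show ?thesis by simp
  qed
  have s: "(sqrt_disc d)^2 = of_int d" using sqrt_disc_sq assms(1) by simp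
  have "(theta d)^2 = ((of_int d)^2 + 2 * of_int d * sqrt_disc d + (sqrt_disc d)^2) / 4"
    unfolding theta_def by (simp add: power_divide power2_sum)
  also have "\<dots> = ((of_int d)^2 + 2 * of_int d * sqrt_disc d + of_int d) / 4" using s by simp
  also have "\<dots> = of_int d * theta d + (of_int d - of_int d ^2) / (4::complex)"
    unfolding theta_def by (simp add: field_simps power2_eq_square)
  finally show ?thesis using e by simp
qed

lemma OK_add: "x \<in> OK d \<Longrightarrow> y \<in> OK d \<Longrightarrow> x + y \<in> OK d"
  unfolding OK_mem
proof (elim exE)
  fix m n m' n' assume "x = of_int m + of_int n * theta d" "y = of_int m' + of_int n' * theta d"
  thus "\<exists>m n. x + y = of_int m + of_int n * theta d"
    by (intro exI[of _ "m+m'"] exI[of _ "n+n'"]) (simp add: algebra_simps)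
qed

lemma OK_uminus: "x \<in> OK d \<Longrightarrow> - x \<in> OK d"
  unfolding OK_mem
proof (elim exE)
  fix m n assume "x = of_int m + of_int n * theta d"
  thus "\<exists>m n. - x = of_int m + of_int n * theta d"
    by (intro exI[of _ "-m"] exI[of _ "-n"]) (simp add: algebra_simps)
qed

lemma OK_int: "of_int m \<in> OK d"
  unfolding OK_mem by (intro exI[of _ m] exI[of _ 0]) simp

lemma OK_one: "1 \<in> OK d" using OK_int[of 1 d] by simp
lemma OK_zero: "0 \<in> OK d" using OK_int[of 0 d] by simp

lemma OK_theta: "theta d \<in> OK d"
  unfolding OK_mem by (intro exI[of _ 0] exI[of _ 1]) simp

lemma OK_mult:
  assumes "d \<le> 0" "d mod 4 = 0 \<or> d mod 4 = 1" "x \<in> OK d" "y \<in> OK d"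
  shows "x * y \<in> OK d"
proof -
  obtain m n m' n' where x: "x = of_int m + of_int n * theta d" and y: "y = of_int m' + of_int n' * theta d"
    using assms(3,4) unfolding OK_mem by blast
  define e where "e = (d - d^2) div 4"
  have t: "(theta d)^2 = of_int d * theta d + of_int e" using theta_sq[OF assms(1,2)] e_def by simp
  have "x * y = of_int m * of_int m' + (of_int m * of_int n' + of_int n * of_int m') * theta d + of_int n * of_int n' * (theta d)^2"
    unfolding x y by (simp add: algebra_simps power2_eq_square)
  also have "\<dots> = of_int (m*m' + n*n'*e) + of_int (m*n' + n*m' + n*n'*d) * theta d"
    unfolding t by (simp add: algebra_simps)
  finally show ?thesis unfolding OK_mem by blast
qed

lemma OK_mult_int: "x \<in> OK d \<Longrightarrow> of_int k * x \<in> OK d"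
  unfolding OK_mem
proof (elim exE)
  fix m n assume "x = of_int m + of_int n * theta d"
  thus "\<exists>m n. of_int k * x = of_int m + of_int n * theta d"
    by (intro exI[of _ "k*m"] exI[of _ "k*n"]) (simp add: algebra_simps)
qed

section \<open>Forms and omega\<close>

lemma Qforms_mem: "(a,b,c) \<in> Qforms d \<longleftrightarrow> b^2 - 4*a*c = d \<and> a > 0 \<and> gcd a (gcd b c) = 1"
  by (simp add: Qforms_def)

lemma omegaQ_eq: "omegaQ d (a,b,c) = (- of_int b + sqrt_disc d) / (2 * of_int a)"
  by (simp add: omegaQ_def)

lemma om_a:
  assumes "(a,b,c) \<in> Qforms d"
  shows "of_int a * omegaQ d (a,b,c) = (- of_int b + sqrt_disc d) / 2"
  using assms by (simp add: Qforms_mem omegaQ_eq)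

lemma om_Im:
  assumes "(a,b,c) \<in> Qforms d" "d < 0"
  shows "Im (omegaQ d (a,b,c)) > 0"
  using assms by (simp add: Qforms_mem omegaQ_eq Im_sqrt_disc Im_divide_of_real)

lemma om_root:
  assumes "(a,b,c) \<in> Qforms d" "d < 0"
  shows "of_int a * (omegaQ d (a,b,c))^2 + of_int b * omegaQ d (a,b,c) + of_int c = 0"
proof -
  define w where "w = omegaQ d (a,b,c)"
  have a0: "a > 0" and dd: "of_int d = (of_int b^2 - 4 * of_int a * of_int c :: complex)"
    using assms(1) by (auto simp: Qforms_mem)
  have s: "(sqrt_disc d)^2 = of_int d" using sqrt_disc_sq assms(2) by simp
  have aw: "2 * of_int a * w + of_int b = sqrt_disc d" using om_a[OF assms(1)] unfolding w_def[symmetric]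
    by (simp add: field_simps)
  have "(2 * of_int a * w + of_int b)^2 = of_int b^2 - 4 * of_int a * of_int c" using aw s dd by simp
  hence "4 * of_int a * (of_int a * w^2 + of_int b * w + of_int c) = (0::complex)"
    by (simp add: power2_eq_square algebra_simps)
  thus ?thesis using a0 unfolding w_def by simp
qed

lemma b_d_even: "b^2 - 4*a*c = d \<Longrightarrow> even (b + (d::int))"
proof -
  assume "b^2 - 4*a*c = d"
  hence "b + d = b * (b + 1) - 2 * (2*a*c)" by (simp add: power2_eq_square algebra_simps)
  thus ?thesis by simp
qed

lemma theta_om:
  assumes "(a,b,c) \<in> Qforms d"
  shows "theta d = of_int a * omegaQ d (a,b,c) + of_int ((b + d) div 2)"
proof -
  have ev: "even (b + d)" using assms b_d_even by (auto simp: Qforms_mem)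
  then obtain t where t: "b + d = 2 * t" by blast
  hence "of_int ((b + d) div 2) = (of_int b + of_int d) / (2::complex)"
    by (simp add: field_simps) (metis of_int_add of_int_mult of_int_numeral)
  thus ?thesis unfolding om_a[OF assms] theta_def by (simp add: field_simps)
qed

section \<open>Lattices\<close>

lemma lat_mem: "x \<in> lattice1 w \<longleftrightarrow> (\<exists>m n. x = of_int m * w + of_int n)"
  by (auto simp: lattice1_def)

lemma lat_add: "x \<in> lattice1 w \<Longrightarrow> y \<in> lattice1 w \<Longrightarrow> x + y \<in> lattice1 w"
  unfolding lat_mem
proof (elim exE)
  fix m n m' n' assume "x = of_int m * w + of_int n" "y = of_int m' * w + of_int n'"
  thus "\<exists>m n. x + y = of_int m * w + of_int n"
    by (intro exI[of _ "m+m'"] exI[of _ "n+n'"]) (simp add: algebra_simps)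
qed

lemma lat_int_mult: "x \<in> lattice1 w \<Longrightarrow> of_int k * x \<in> lattice1 w"
  unfolding lat_mem
proof (elim exE)
  fix m n assume "x = of_int m * w + of_int n"
  thus "\<exists>m n. of_int k * x = of_int m * w + of_int n"
    by (intro exI[of _ "k*m"] exI[of _ "k*n"]) (simp add: algebra_simps)
qed

lemma lat_int: "of_int k \<in> lattice1 w"
  unfolding lat_mem by (intro exI[of _ 0] exI[of _ k]) simp

lemma lat_zero: "0 \<in> lattice1 w" using lat_int[of 0 w] by simp
lemma lat_one: "1 \<in> lattice1 w" using lat_int[of 1 w] by simp
lemma lat_w: "w \<in> lattice1 w" unfolding lat_mem by (intro exI[of _ 1] exI[of _ 0]) simp

lemma lat_theta:
  assumes "(a,b,c) \<in> Qforms d" "d < 0" "x \<in> lattice1 (omegaQ d (a,b,c))"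
  shows "theta d * x \<in> lattice1 (omegaQ d (a,b,c))"
proof -
  define w where "w = omegaQ d (a,b,c)"
  define t where "t = (b + d) div 2"
  obtain m n where x: "x = of_int m * w + of_int n" using assms(3) unfolding w_def lat_mem by blast
  have th: "theta d = of_int a * w + of_int t" using theta_om[OF assms(1)] unfolding w_def t_def .
  have r: "of_int a * w^2 = - of_int b * w - of_int c" using om_root[OF assms(1,2)] unfolding w_def[symmetric]
    by (simp add: algebra_simps eq_neg_iff_add_eq_0)
  have "theta d * x = of_int m * (of_int a * w^2) + (of_int (m*t) + of_int (n*a)) * w + of_int (n*t)"
    unfolding th x by (simp add: algebra_simps power2_eq_square)
  also have "\<dots> = of_int (m*t + n*a - m*b) * w + of_int (n*t - m*c)"
    unfolding r by (simp add: algebra_simps)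
  finally show ?thesis unfolding w_def[symmetric] lat_mem by blast
qed

lemma lat_OK:
  assumes "(a,b,c) \<in> Qforms d" "d < 0" "x \<in> lattice1 (omegaQ d (a,b,c))" "r \<in> OK d"
  shows "r * x \<in> lattice1 (omegaQ d (a,b,c))"
proof -
  obtain m n where r: "r = of_int m + of_int n * theta d" using assms(4) unfolding OK_mem by blast
  have "r * x = of_int m * x + of_int n * (theta d * x)" unfolding r by (simp add: algebra_simps)
  thus ?thesis using lat_add lat_int_mult lat_theta[OF assms(1,2,3)] assms(3) by metis
qed

section \<open>Linear independence and Moebius\<close>

lemma lin_indep:
  assumes "Im w \<noteq> 0" "of_real x * w + of_real y = 0"
  shows "x = 0 \<and> y = 0"
proof -
  have "Im (of_real x * w + of_real y) = x * Im w" by simp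
  hence "x = 0" using assms by simp
  thus ?thesis using assms by simp
qed

lemma lin_indep_int:
  assumes "Im w \<noteq> 0" "of_int m * w + of_int n = 0"
  shows "m = 0 \<and> n = 0"
  using lin_indep[OF assms(1), of "of_int m" "of_int n"] assms(2) by simp

lemma lin_indep_int2:
  assumes "Im w \<noteq> 0" "of_int m * w + of_int n = of_int m' * w + of_int n'"
  shows "m = m' \<and> n = n'"
proof -
  have "of_int (m - m') * w + of_int (n - n') = 0" using assms(2) by (simp add: algebra_simps)
  thus ?thesis using lin_indep_int[OF assms(1)] by fastforce
qed

lemma SL2Z_mem: "(p,q,r,s) \<in> SL2Z \<longleftrightarrow> p* s - q*r = 1" by (simp add: SL2Z_def)

lemma jfac_eq: "jfac (p,q,r,s) t = of_int r * t + of_int s" by (simp add: jfac_def)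
lemma moebius_eq: "moebius (p,q,r,s) t = (of_int p * t + of_int q) / (of_int r * t + of_int s)"
  by (simp add: moebius_def)

lemma jfac_nz:
  assumes "(p,q,r,s) \<in> SL2Z" "Im t \<noteq> 0"
  shows "of_int r * t + of_int s \<noteq> 0"
proof
  assume h: "of_int r * t + of_int s = 0"
  hence "r = 0 \<and> s = 0" using lin_indep_int[OF assms(2)] by blast
  thus False using assms(1) by (simp add: SL2Z_mem)
qed

lemma jfac_nz': "\<gamma> \<in> SL2Z \<Longrightarrow> Im t \<noteq> 0 \<Longrightarrow> jfac \<gamma> t \<noteq> 0"
  by (cases \<gamma>) (auto simp: jfac_eq jfac_nz)

lemma Im_moebius:
  assumes "(p,q,r,s) \<in> SL2Z"
  shows "Im (moebius (p,q,r,s) t) = Im t / ((Re (of_int r * t + of_int s))^2 + (Im (of_int r * t + of_int s))^2)"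
proof -
  have d: "p* s - q*r = 1" using assms by (simp add: SL2Z_mem)
  have "real_of_int p * Im t * (real_of_int r * Re t + real_of_int s) - (real_of_int p * Re t + real_of_int q) * (real_of_int r * Im t)
        = real_of_int (p* s - q*r) * Im t" by (simp add: algebra_simps)
  also have "\<dots> = Im t" using d by simp
  finally have e: "real_of_int p * Im t * (real_of_int r * Re t + real_of_int s) - (real_of_int p * Re t + real_of_int q) * (real_of_int r * Im t) = Im t" .
  show ?thesis unfolding moebius_eq Im_divide using e by (simp add: power2_eq_square)
qed

lemma Im_moebius_pos:
  assumes "\<gamma> \<in> SL2Z" "Im t > 0"
  shows "Im (moebius \<gamma> t) > 0"
proof -
  obtain p q r s where g: "\<gamma> = (p,q,r,s)" by (cases \<gamma>) auto
  have nz: "of_int r * t + of_int s \<noteq> 0" using jfac_nz assms g by fastforce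
  hence "(Re (of_int r * t + of_int s))^2 + (Im (of_int r * t + of_int s))^2 > 0"
    by (metis complex_eq_0 add_pos_nonneg add_nonneg_pos less_eq_real_def not_less zero_le_power2 power2_less_eq_zero_iff)
  thus ?thesis using Im_moebius[of p q r s t] assms g by simp
qed

lemma mat_inv_SL: "\<gamma> \<in> SL2Z \<Longrightarrow> mat_inv \<gamma> \<in> SL2Z"
  by (cases \<gamma>) (auto simp: mat_inv_def SL2Z_mem algebra_simps)

lemma mat_inv_inv: "mat_inv (mat_inv \<gamma>) = \<gamma>"
  by (cases \<gamma>) (auto simp: mat_inv_def)

lemma moebius_inv:
  assumes "\<gamma> \<in> SL2Z" "Im t \<noteq> 0"
  shows "moebius (mat_inv \<gamma>) (moebius \<gamma> t) = t"
proof -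
  obtain p q r s where g: "\<gamma> = (p,q,r,s)" by (cases \<gamma>) auto
  have d: "p* s - q*r = 1" using assms g by (simp add: SL2Z_mem)
  have nz: "of_int r * t + of_int s \<noteq> 0" using jfac_nz assms g by fastforce
  define z where "z = (of_int p * t + of_int q) / (of_int r * t + of_int s)"
  have zz: "z * (of_int r * t + of_int s) = of_int p * t + of_int q" unfolding z_def using nz by simp
  have num: "(of_int s * z - of_int q) * (of_int r * t + of_int s) = t"
  proof -
    have "(of_int s * z - of_int q) * (of_int r * t + of_int s) = of_int s * (z * (of_int r * t + of_int s)) - of_int q * (of_int r * t + of_int s)"
      by (simp add: algebra_simps)
    also have "\<dots> = of_int s * (of_int p * t + of_int q) - of_int q * (of_int r * t + of_int s)"
      by (simp only: zz)
    also have "\<dots> = of_int (p* s - q*r) * t" by (simp add: algebra_simps)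
    finally show ?thesis using d by simp
  qed
  have den: "(- of_int r * z + of_int p) * (of_int r * t + of_int s) = 1"
  proof -
    have "(- of_int r * z + of_int p) * (of_int r * t + of_int s) = - of_int r * (z * (of_int r * t + of_int s)) + of_int p * (of_int r * t + of_int s)"
      by (simp add: algebra_simps)
    also have "\<dots> = - of_int r * (of_int p * t + of_int q) + of_int p * (of_int r * t + of_int s)"
      by (simp only: zz)
    also have "\<dots> = of_int (p* s - q*r)" by (simp add: algebra_simps)
    finally show ?thesis using d by simp
  qed
  have "moebius (mat_inv \<gamma>) (moebius \<gamma> t) = (of_int s * z - of_int q) / (- of_int r * z + of_int p)"
    unfolding g mat_inv_def by (simp add: moebius_eq z_def[symmetric])
  also have "\<dots> = t" using num den
    by (metis (no_types, lifting) div_by_1 mult_divide_mult_cancel_right nz)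
  finally show ?thesis .
qed

lemma moebius_inv':
  assumes "\<gamma> \<in> SL2Z" "Im t \<noteq> 0"
  shows "moebius \<gamma> (moebius (mat_inv \<gamma>) t) = t"
  using moebius_inv[OF mat_inv_SL[OF assms(1)] assms(2)] by (simp add: mat_inv_inv)

lemma mat_mult_SL: "x \<in> SL2Z \<Longrightarrow> y \<in> SL2Z \<Longrightarrow> mat_mult x y \<in> SL2Z"
proof -
  assume "x \<in> SL2Z" "y \<in> SL2Z"
  moreover obtain p q r s where x: "x = (p,q,r,s)" by (cases x) auto
  moreover obtain p' q' r' s' where y: "y = (p',q',r',s')" by (cases y) auto
  ultimately have "p* s - q*r = 1" "p'* s' - q'*r' = 1" by (auto simp: SL2Z_mem)
  moreover have "(p * p' + q * r') * (r * q' + s * s') - (p * q' + q * s') * (r * p' + s * r') = (p* s - q*r) * (p'* s' - q'*r')"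
    by (simp add: algebra_simps)
  ultimately show ?thesis unfolding x y mat_mult_def SL2Z_def by auto
qed

lemma moebius_mult:
  assumes "x \<in> SL2Z" "y \<in> SL2Z" "Im t \<noteq> 0"
  shows "moebius (mat_mult x y) t = moebius x (moebius y t)"
proof -
  obtain p q r s where x: "x = (p,q,r,s)" by (cases x) auto
  obtain p' q' r' s' where y: "y = (p',q',r',s')" by (cases y) auto
  have nz: "of_int r' * t + of_int s' \<noteq> 0" using jfac_nz assms y by fastforce
  show ?thesis unfolding x y mat_mult_def using nz
    by (simp add: moebius_eq divide_simps) (simp add: algebra_simps)
qed

lemma mat_cancel: "g \<in> SL2Z \<Longrightarrow> mat_mult (mat_inv g) (mat_mult g x) = x"
  by (cases g, cases x) (auto simp: mat_inv_def mat_mult_def SL2Z_mem algebra_simps; simp_all add: mult.assoc[symmetric] distrib_right)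

lemma mat_cancel2: "g \<in> SL2Z \<Longrightarrow> mat_mult g (mat_mult (mat_inv g) x) = x"
  using mat_cancel[OF mat_inv_SL, of g x] by (simp add: mat_inv_inv)

lemma mat_mult_id: "mat_mult g mat_id = g"
  by (cases g) (auto simp: mat_id_def mat_mult_def)

lemma moebius_id: "moebius mat_id t = t"
  by (simp add: mat_id_def moebius_eq)

lemma id_SL: "mat_id \<in> SL2Z" by (simp add: mat_id_def SL2Z_mem)

section \<open>Forms under SL2\<close>

lemma qact_eq: "qform_act (a,b,c) (p,q,r,s) = (a * p^2 + b * p * r + c * r^2,
      2 * a * p * q + b * (p * s + q * r) + 2 * c * r * s,
      a * q^2 + b * q * s + c * s^2)"
  by (simp add: qform_act_def)

lemma qact_disc:
  fixes a b c p q r s :: int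
  shows "(2 * a * p * q + b * (p * s + q * r) + 2 * c * r * s)^2 - 4 * (a * p^2 + b * p * r + c * r^2) * (a * q^2 + b * q * s + c * s^2)
    = (p * s - q * r)^2 * (b^2 - 4*a*c)"
  by (simp add: power2_eq_square algebra_simps)

lemma qact_inv:
  assumes "(p,q,r,s) \<in> SL2Z"
  shows "qform_act (qform_act (a,b,c) (p,q,r,s)) (mat_inv (p,q,r,s)) = (a,b,c)"
proof -
  have d: "p * s - q * r = 1" using assms by (simp add: SL2Z_mem)
  define A where "A = a * p^2 + b * p * r + c * r^2"
  define B where "B = 2 * a * p * q + b * (p * s + q * r) + 2 * c * r * s"
  define C where "C = a * q^2 + b * q * s + c * s^2"
  have 1: "A * s^2 + B * s * (-r) + C * (-r)^2 = a * (p * s - q * r)^2"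
    unfolding A_def B_def C_def by (simp add: power2_eq_square algebra_simps)
  have 2: "2 * A * s * (-q) + B * (s * p + (-q) * (-r)) + 2 * C * (-r) * p = b * (p * s - q * r)^2"
    unfolding A_def B_def C_def by (simp add: power2_eq_square algebra_simps)
  have 3: "A * (-q)^2 + B * (-q) * p + C * p^2 = c * (p * s - q * r)^2"
    unfolding A_def B_def C_def by (simp add: power2_eq_square algebra_simps)
  show ?thesis unfolding qact_eq mat_inv_def A_def[symmetric] B_def[symmetric] C_def[symmetric]
    using 1 2 3 d by (simp add: qact_eq)
qed

lemma qact_pos:
  assumes "(a,b,c) \<in> Qforms d" "d < 0" "(p,q,r,s) \<in> SL2Z"
  shows "a * p^2 + b * p * r + c * r^2 > 0"
proof -
  have a0: "a > 0" and dd: "b^2 - 4*a*c = d" using assms(1) by (auto simp: Qforms_mem)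
  have e: "4 * a * (a * p^2 + b * p * r + c * r^2) = (2*a*p + b*r)^2 - d * r^2"
    unfolding dd[symmetric] by (simp add: power2_eq_square algebra_simps)
  show ?thesis
  proof (cases "r = 0")
    case True
    hence "p \<noteq> 0" using assms(3) by (auto simp: SL2Z_mem)
    thus ?thesis using True a0 by simp
  next
    case False
    hence "r^2 > 0" by simp
    hence "d * r^2 < 0" using assms(2) mult_neg_pos by blast
    hence "- d * r^2 > 0" by simp
    hence "4 * a * (a * p^2 + b * p * r + c * r^2) > 0" unfolding e
      using zero_le_power2[of "2*a*p + b*r"] by linarith
    thus ?thesis using a0 by (simp add: zero_less_mult_iff)
  qed
qed

lemma qact_Qforms:
  assumes "Q \<in> Qforms d" "d < 0" "\<gamma> \<in> SL2Z"
  shows "qform_act Q \<gamma> \<in> Qforms d"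
proof -
  obtain a b c where Q: "Q = (a,b,c)" by (cases Q) auto
  obtain p q r s where g: "\<gamma> = (p,q,r,s)" by (cases \<gamma>) auto
  have dt: "p * s - q * r = 1" using assms(3) g by (simp add: SL2Z_mem)
  have dd: "b^2 - 4*a*c = d" and g1: "gcd a (gcd b c) = 1" using assms(1) Q by (auto simp: Qforms_mem)
  define A where "A = a * p^2 + b * p * r + c * r^2"
  define B where "B = 2 * a * p * q + b * (p * s + q * r) + 2 * c * r * s"
  define C where "C = a * q^2 + b * q * s + c * s^2"
  have act: "qform_act Q \<gamma> = (A,B,C)" unfolding Q g qact_eq A_def B_def C_def ..
  have disc: "B^2 - 4*A*C = d" unfolding A_def B_def C_def qact_disc dt dd by simp
  have pos: "A > 0" unfolding A_def using qact_pos assms Q g by blast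
  have inv: "qform_act (A,B,C) (s, -q, -r, p) = (a,b,c)"
    using qact_inv[of p q r s a b c] assms(3) g act Q by (simp add: mat_inv_def)
  define k where "k = gcd A (gcd B C)"
  have kA: "k dvd A" and kB: "k dvd B" and kC: "k dvd C" unfolding k_def by (auto intro: dvd_trans)
  have "k dvd a" "k dvd b" "k dvd c" using inv kA kB kC unfolding qact_eq
    by (auto intro!: dvd_add dvd_mult2 simp: power2_eq_square)
  hence "k dvd gcd a (gcd b c)" by simp
  hence "k dvd 1" using g1 by simp
  moreover have "k \<ge> 0" unfolding k_def by simp
  ultimately have "k = 1" by simp
  thus ?thesis unfolding act Qforms_mem using disc pos k_def by simp
qed

lemma omega_split:
  "omegaQ d (a,b,c) = of_real (- real_of_int b / (2 * real_of_int a)) + of_real (1 / (2 * real_of_int a)) * sqrt_disc d"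
  unfolding omegaQ_eq by (cases "a = 0") (simp_all add: field_simps)

lemma Re_om: "Re (omegaQ d (a,b,c)) = - real_of_int b / (2 * real_of_int a)"
  unfolding omega_split by (simp add: Im_sqrt_disc)

lemma Im_om: "Im (omegaQ d (a,b,c)) = sqrt (real_of_int (-d)) / (2 * real_of_int a)"
  unfolding omega_split by (simp add: Im_sqrt_disc)

lemma form_unique:
  assumes "Q1 \<in> Qforms d" "Q2 \<in> Qforms d" "d < 0" "omegaQ d Q1 = omegaQ d Q2"
  shows "Q1 = Q2"
proof -
  obtain a b c where Q1: "Q1 = (a,b,c)" by (cases Q1) auto
  obtain a' b' c' where Q2: "Q2 = (a',b',c')" by (cases Q2) auto
  have a: "a > 0" "b^2 - 4*a*c = d" "a' > 0" "b'^2 - 4*a'*c' = d" using assms Q1 Q2 by (auto simp: Qforms_mem)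
  have sq: "sqrt (real_of_int (-d)) > 0" using assms(3) by simp
  have "sqrt (real_of_int (-d)) / (2 * real_of_int a) = sqrt (real_of_int (-d)) / (2 * real_of_int a')"
    using arg_cong[OF assms(4), of Im] unfolding Q1 Q2 Im_om .
  hence aa: "a = a'" using sq a by (simp add: field_simps)
  have "- real_of_int b / (2 * real_of_int a) = - real_of_int b' / (2 * real_of_int a')"
    using arg_cong[OF assms(4), of Re] unfolding Q1 Q2 Re_om .
  hence bb: "b = b'" using aa a by (simp add: field_simps)
  have "4*a*c = 4*a*c'" using a(2) a(4) unfolding aa bb by linarith
  hence "c = c'" using a(1) by simp
  thus ?thesis using aa bb Q1 Q2 by simp
qed

lemma qact_omega:
  assumes "Q \<in> Qforms d" "d < 0" "\<gamma> \<in> SL2Z"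
  shows "omegaQ d (qform_act Q \<gamma>) = moebius (mat_inv \<gamma>) (omegaQ d Q)"
proof -
  obtain a b c where Q: "Q = (a,b,c)" by (cases Q) auto
  obtain p q r s where g: "\<gamma> = (p,q,r,s)" by (cases \<gamma>) auto
  define A where "A = a * p^2 + b * p * r + c * r^2"
  define B where "B = 2 * a * p * q + b * (p * s + q * r) + 2 * c * r * s"
  define C where "C = a * q^2 + b * q * s + c * s^2"
  have act: "qform_act Q \<gamma> = (A,B,C)" unfolding Q g qact_eq A_def B_def C_def ..
  have QF: "(A,B,C) \<in> Qforms d" using qact_Qforms[OF assms] act by simp
  hence A0: "A > 0" and dd: "B^2 - 4*A*C = d" by (auto simp: Qforms_mem)
  define w where "w = omegaQ d Q"
  have wIm: "Im w > 0" unfolding w_def Q using om_Im assms Q by blast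
  define z where "z = moebius (mat_inv \<gamma>) w"
  have zIm: "Im z > 0" unfolding z_def using Im_moebius_pos[OF mat_inv_SL[OF assms(3)] wIm] .
  have gz: "moebius \<gamma> z = w" unfolding z_def using moebius_inv'[OF assms(3)] wIm by simp
  have u: "of_int r * z + of_int s \<noteq> 0" using jfac_nz[of p q r s z] assms(3) g zIm by simp
  have pq: "of_int p * z + of_int q = w * (of_int r * z + of_int s)"
    using gz u unfolding g moebius_eq by (simp add: field_simps)
  have rt: "of_int a * w^2 + of_int b * w + of_int c = 0" using om_root assms Q unfolding w_def by blast
  have "of_int A * z^2 + of_int B * z + of_int C =
      of_int a * (of_int p * z + of_int q)^2 + of_int b * (of_int p * z + of_int q) * (of_int r * z + of_int s)
      + of_int c * (of_int r * z + of_int s)^2"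
    unfolding A_def B_def C_def by (simp add: power2_eq_square algebra_simps)
  also have "\<dots> = (of_int r * z + of_int s)^2 * (of_int a * w^2 + of_int b * w + of_int c)"
    unfolding pq by (simp add: power2_eq_square algebra_simps)
  finally have zr: "of_int A * z^2 + of_int B * z + of_int C = 0" using rt by simp
  have s2: "(sqrt_disc d)^2 = of_int d" using sqrt_disc_sq[of d] assms(2) by linarith
  have "(2 * of_int A * z + of_int B)^2 = 4 * of_int A * (of_int A * z^2 + of_int B * z + of_int C) + (of_int B^2 - 4 * of_int A * of_int C :: complex)"
    by (simp add: power2_eq_square algebra_simps)
  also have "\<dots> = of_int d"
  proof -
    have "(of_int B^2 - 4 * of_int A * of_int C :: complex) = of_int d" using arg_cong[OF dd, of "of_int :: int \<Rightarrow> complex"] by simp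
    thus ?thesis using zr by simp
  qed
  finally have "(2 * of_int A * z + of_int B)^2 = (sqrt_disc d)^2" using s2 by simp
  hence "2 * of_int A * z + of_int B = sqrt_disc d \<or> 2 * of_int A * z + of_int B = - sqrt_disc d"
    using power2_eq_iff by blast
  moreover have "Im (2 * of_int A * z + of_int B) > 0" using A0 zIm by simp
  moreover have "Im (- sqrt_disc d) \<le> 0" using assms(2) by (simp add: Im_sqrt_disc)
  ultimately have "2 * of_int A * z + of_int B = sqrt_disc d" by force
  hence "z = omegaQ d (A,B,C)" unfolding omegaQ_eq using A0 by (simp add: field_simps)
  thus ?thesis unfolding act z_def w_def by simp
qed

section \<open>Lattice transformation and ideal products\<close>

definition cm :: "complex \<Rightarrow> complex set \<Rightarrow> complex set" where
  "cm v X = {v * x | x. x \<in> X}"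

lemma lat_transform:
  assumes "\<delta> \<in> SL2Z" "Im t \<noteq> 0"
  shows "lattice1 t = cm (jfac \<delta> t) (lattice1 (moebius \<delta> t))"
proof -
  obtain p q r s where g: "\<delta> = (p,q,r,s)" by (cases \<delta>) auto
  have dt: "p * s - q * r = 1" using assms g by (simp add: SL2Z_mem)
  define J where "J = of_int r * t + of_int s"
  have J: "J \<noteq> 0" unfolding J_def using jfac_nz assms g by fastforce
  define mu where "mu = (of_int p * t + of_int q) / J"
  have jm: "jfac \<delta> t = J" "moebius \<delta> t = mu" unfolding g J_def mu_def by (simp_all add: jfac_eq moebius_eq)
  have key: "J * (of_int m * mu + of_int n) = of_int (m*p + n*r) * t + of_int (m*q + n * s)" for m n
    unfolding mu_def J_def using J[unfolded J_def] by (simp add: field_simps)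
  show ?thesis unfolding jm cm_def
  proof (intro set_eqI iffI)
    fix x assume "x \<in> lattice1 t"
    then obtain M N where x: "x = of_int M * t + of_int N" unfolding lat_mem by blast
    define m where "m = M * s - N * r"
    define n where "n = N * p - M * q"
    have "m*p + n*r = M * (p * s - q * r)" "m*q + n * s = N * (p * s - q * r)"
      unfolding m_def n_def by (simp_all add: algebra_simps)
    hence "x = J * (of_int m * mu + of_int n)" unfolding key x using dt by simp
    thus "x \<in> {J * y |y. y \<in> lattice1 mu}" unfolding lat_mem by blast
  next
    fix x assume "x \<in> {J * y |y. y \<in> lattice1 mu}"
    then obtain m n where "x = J * (of_int m * mu + of_int n)" unfolding lat_mem by blast
    thus "x \<in> lattice1 t" unfolding key lat_mem by blast
  qed
qed

lemma ideal_mult_comm: "ideal_mult A B = ideal_mult B A"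
  unfolding ideal_mult_def
proof (intro set_eqI iffI; elim CollectE exE conjE; intro CollectI)
  fix x n f g assume "\<forall>i<(n::nat). f i \<in> A \<and> g i \<in> B" "x = (\<Sum>i<n. f i * g i)"
  thus "\<exists>(n::nat) f g. (\<forall>i<n. f i \<in> B \<and> g i \<in> A) \<and> x = (\<Sum>i<n. f i * g i)"
    by (intro exI[of _ n] exI[of _ g] exI[of _ f]) (simp add: mult.commute)
next
  fix x n f g assume "\<forall>i<(n::nat). f i \<in> B \<and> g i \<in> A" "x = (\<Sum>i<n. f i * g i)"
  thus "\<exists>(n::nat) f g. (\<forall>i<n. f i \<in> A \<and> g i \<in> B) \<and> x = (\<Sum>i<n. f i * g i)"
    by (intro exI[of _ n] exI[of _ g] exI[of _ f]) (simp add: mult.commute)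
qed

lemma sum_closed:
  assumes "0 \<in> S" "\<And>x y. x \<in> S \<Longrightarrow> y \<in> S \<Longrightarrow> x + y \<in> S" "\<forall>i<(n::nat). h i \<in> S"
  shows "(\<Sum>i<n. h i) \<in> S"
  using assms(3)
proof (induction n)
  case 0 thus ?case using assms(1) by simp
next
  case (Suc n) thus ?case using assms(2) by simp
qed

definition OKmod :: "int \<Rightarrow> complex set \<Rightarrow> bool" where
  "OKmod d X \<longleftrightarrow> 0 \<in> X \<and> (\<forall>x\<in>X. \<forall>y\<in>X. x + y \<in> X) \<and> (\<forall>r\<in>OK d. \<forall>x\<in>X. r * x \<in> X)"

lemma ideal_mult_principal:
  assumes "OKmod d X"
  shows "ideal_mult (principal_ideal d v) X = cm v X"
proof (intro set_eqI iffI)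
  fix x assume "x \<in> ideal_mult (principal_ideal d v) X"
  then obtain n :: nat and f g where fg: "\<forall>i<n. f i \<in> principal_ideal d v \<and> g i \<in> X" and x: "x = (\<Sum>i<n. f i * g i)"
    unfolding ideal_mult_def by blast
  have "0 \<in> cm v X" unfolding cm_def using assms by (auto simp: OKmod_def intro!: exI[of _ 0])
  moreover have "\<And>x y. x \<in> cm v X \<Longrightarrow> y \<in> cm v X \<Longrightarrow> x + y \<in> cm v X"
  proof -
    fix x y assume "x \<in> cm v X" "y \<in> cm v X"
    then obtain x' y' where "x = v * x'" "y = v * y'" "x' \<in> X" "y' \<in> X" unfolding cm_def by blast
    moreover have "x' + y' \<in> X" using assms \<open>x' \<in> X\<close> \<open>y' \<in> X\<close> by (auto simp: OKmod_def)
    ultimately show "x + y \<in> cm v X" unfolding cm_def by (auto simp: distrib_left[symmetric])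
  qed
  moreover have "\<forall>i<n. f i * g i \<in> cm v X"
  proof (intro allI impI)
    fix i assume "i < n"
    then obtain ee where "f i = v * ee" "ee \<in> OK d" "g i \<in> X" using fg unfolding principal_ideal_def by blast
    thus "f i * g i \<in> cm v X" unfolding cm_def using assms
      by (auto simp: OKmod_def mult.assoc intro!: exI[of _ "ee * g i"])
  qed
  ultimately show "x \<in> cm v X" unfolding x by (rule sum_closed)
next
  fix x assume "x \<in> cm v X"
  then obtain y where y: "x = v * y" "y \<in> X" unfolding cm_def by blast
  have "v \<in> principal_ideal d v" unfolding principal_ideal_def using OK_one by force
  thus "x \<in> ideal_mult (principal_ideal d v) X" unfolding ideal_mult_def
    by (intro CollectI exI[of _ 1] exI[of _ "\<lambda>_. v"] exI[of _ "\<lambda>_. y"]) (simp add: y)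
qed

lemma lat_OKmod:
  assumes "Q \<in> Qforms d" "d < 0"
  shows "OKmod d (lattice1 (omegaQ d Q))"
  using assms lat_zero lat_add lat_OK unfolding OKmod_def by (cases Q) auto

section \<open>Multipliers\<close>

lemma multiplier_OK:
  assumes "(a,b,c) \<in> Qforms d" "d < 0" "\<forall>x\<in>lattice1 (omegaQ d (a,b,c)). u * x \<in> lattice1 (omegaQ d (a,b,c))"
  shows "u \<in> OK d"
proof -
  define w where "w = omegaQ d (a,b,c)"
  have a0: "a > 0" and g1: "gcd a (gcd b c) = 1" using assms(1) by (auto simp: Qforms_mem)
  have wIm: "Im w \<noteq> 0" using om_Im assms unfolding w_def by fastforce
  obtain m n where u: "u = of_int m * w + of_int n" using assms(3) lat_one unfolding w_def[symmetric]
    by (metis mult.right_neutral lat_mem)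
  obtain M N where uw: "u * w = of_int M * w + of_int N" using assms(3) lat_w unfolding w_def[symmetric]
    by (metis lat_mem)
  have r: "of_int a * w^2 = - of_int b * w - of_int c" using om_root[OF assms(1,2)] unfolding w_def[symmetric]
    by (simp add: algebra_simps eq_neg_iff_add_eq_0)
  have eq1: "of_int a * (u * w) = of_int (n*a - m*b) * w + of_int (- m*c)"
  proof -
    have "of_int a * (u * w) = of_int m * (of_int a * w^2) + of_int (n * a) * w"
      unfolding u by (simp add: algebra_simps power2_eq_square)
    also have "\<dots> = of_int (n*a - m*b) * w + of_int (- m*c)" unfolding r by (simp add: algebra_simps)
    finally show ?thesis .
  qed
  have eq2: "of_int a * (u * w) = of_int (a*M) * w + of_int (a*N)" unfolding uw by (simp add: algebra_simps)
  have e: "n*a - m*b = a*M" "- m*c = a*N" using lin_indep_int2[OF wIm, of "n*a - m*b" "- m*c" "a*M" "a*N"] eq1 eq2 by auto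
  have "m*b = a*(n - M)" using e(1) by (simp add: algebra_simps)
  hence d1: "a dvd m*b" by simp
  have "m*c = a*(-N)" using e(2) by simp
  hence d2: "a dvd m*c" by simp
  obtain x y where b1: "x * a + y * gcd b c = 1" using bezout_int[of a "gcd b c"] g1 by auto
  obtain x' y' where b2: "x' * b + y' * c = gcd b c" using bezout_int[of b c] by auto
  have "m = m * (x * a + y * (x' * b + y' * c))" using b1 b2 by simp
  also have "\<dots> = x*(m*a) + (y*x')*(m*b) + (y*y')*(m*c)" by (simp add: algebra_simps)
  finally have "a dvd m" using d1 d2 by (metis dvd_add dvd_mult dvd_triv_right)
  then obtain k where k: "m = a * k" by blast
  have "u = of_int k * (of_int a * w + of_int ((b + d) div 2)) + of_int (n - k * ((b + d) div 2))"
    unfolding u k by (simp add: algebra_simps)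
  also have "\<dots> = of_int k * theta d + of_int (n - k * ((b + d) div 2))"
    using theta_om[OF assms(1)] unfolding w_def by simp
  finally show ?thesis unfolding OK_mem by (metis add.commute mult.commute)
qed

lemma principal_cm: "principal_ideal d v = cm v (OK d)"
  by (simp add: principal_ideal_def cm_def)

definition modc :: "int \<Rightarrow> bool" where "modc d \<longleftrightarrow> d < 0 \<and> (d mod 4 = 0 \<or> d mod 4 = 1)"

lemma OKmod_cm:
  assumes "OKmod d X" shows "OKmod d (cm v X)"
  unfolding OKmod_def
proof (intro conjI ballI)
  have "0 \<in> X" using assms by (simp add: OKmod_def)
  thus "0 \<in> cm v X" unfolding cm_def by (intro CollectI exI[of _ 0]) simp
next
  fix x y assume "x \<in> cm v X" "y \<in> cm v X"
  then obtain x' y' where "x = v * x'" "y = v * y'" "x' \<in> X" "y' \<in> X" unfolding cm_def by blast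
  moreover have "x' + y' \<in> X" using assms \<open>x' \<in> X\<close> \<open>y' \<in> X\<close> by (auto simp: OKmod_def)
  ultimately show "x + y \<in> cm v X" unfolding cm_def by (auto simp: distrib_left[symmetric])
next
  fix r x assume "r \<in> OK d" "x \<in> cm v X"
  then obtain x' where "x = v * x'" "x' \<in> X" unfolding cm_def by blast
  moreover have "r * x' \<in> X" using assms \<open>x' \<in> X\<close> \<open>r \<in> OK d\<close> by (auto simp: OKmod_def)
  moreover have "r * (v * x') = v * (r * x')" by simp
  ultimately show "r * x \<in> cm v X" unfolding cm_def by auto
qed

lemma OKmod_OK: "modc d \<Longrightarrow> OKmod d (OK d)"
  unfolding OKmod_def modc_def using OK_zero OK_add OK_mult by auto

lemma principal_sub:
  assumes "(a,b,c) \<in> Qforms d" "modc d" "v \<noteq> 0" "mu \<noteq> 0"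
    "cm v (lattice1 (omegaQ d (a,b,c))) \<subseteq> cm mu (lattice1 (omegaQ d (a,b,c)))"
  shows "principal_ideal d v \<subseteq> principal_ideal d mu"
proof -
  have d0: "d < 0" "d \<le> 0" "d mod 4 = 0 \<or> d mod 4 = 1" using assms(2) by (auto simp: modc_def)
  define L where "L = lattice1 (omegaQ d (a,b,c))"
  have "\<forall>x\<in>L. (v / mu) * x \<in> L"
  proof
    fix x assume "x \<in> L"
    hence "v * x \<in> cm mu L" using assms(5) unfolding L_def[symmetric] cm_def by blast
    then obtain y where "v * x = mu * y" "y \<in> L" unfolding cm_def by blast
    thus "(v / mu) * x \<in> L" using assms(4) by (simp add: field_simps)
  qed
  hence u: "v / mu \<in> OK d" using multiplier_OK[OF assms(1) d0(1)] unfolding L_def by blast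
  show ?thesis
  proof
    fix x assume "x \<in> principal_ideal d v"
    then obtain e where "x = v * e" "e \<in> OK d" unfolding principal_ideal_def by blast
    moreover have "v * e = mu * ((v / mu) * e)" using assms(4) by simp
    moreover have "(v / mu) * e \<in> OK d" using OK_mult[OF d0(2,3) u] \<open>e \<in> OK d\<close> by blast
    ultimately show "x \<in> principal_ideal d mu" unfolding principal_ideal_def by blast
  qed
qed

lemma principal_eq:
  assumes "(a,b,c) \<in> Qforms d" "modc d" "v \<noteq> 0" "mu \<noteq> 0"
    "cm v (lattice1 (omegaQ d (a,b,c))) = cm mu (lattice1 (omegaQ d (a,b,c)))"
  shows "principal_ideal d v = principal_ideal d mu"
  using principal_sub[OF assms(1-4)] principal_sub[OF assms(1,2,4,3)] assms(5) by blast

section \<open>Membership in I_K(n)\<close>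

lemma OK_Kfield: "OK d \<subseteq> Kfield d"
proof
  fix x assume "x \<in> OK d"
  then obtain m n where x: "x = of_int m + of_int n * theta d" unfolding OK_mem by blast
  have "x = of_real (real_of_int m + real_of_int n * real_of_int d / 2) + of_real (real_of_int n / 2) * sqrt_disc d"
    unfolding x theta_def by (simp add: field_simps)
  thus "x \<in> Kfield d" unfolding Kfield_def
    by (intro CollectI exI[of _ "real_of_int m + real_of_int n * real_of_int d / 2"] exI[of _ "real_of_int n / 2"]) simp
qed

lemma lat_Kfield: "lattice1 (omegaQ d (a,b,c)) \<subseteq> Kfield d"
proof
  fix x assume "x \<in> lattice1 (omegaQ d (a,b,c))"
  then obtain m n where x: "x = of_int m * omegaQ d (a,b,c) + of_int n" unfolding lat_mem by blast
  have "x = of_real (real_of_int m * (- real_of_int b / (2 * real_of_int a)) + real_of_int n)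
      + of_real (real_of_int m * (1 / (2 * real_of_int a))) * sqrt_disc d"
    unfolding x omega_split by (simp add: algebra_simps)
  thus "x \<in> Kfield d" unfolding Kfield_def
    by (intro CollectI exI[of _ "real_of_int m * (- real_of_int b / (2 * real_of_int a)) + real_of_int n"]
      exI[of _ "real_of_int m * (1 / (2 * real_of_int a))"]) simp
qed

lemma integral_intro:
  assumes "X \<subseteq> OK d" "OKmod d X" "x0 \<in> X" "x0 \<noteq> 0"
  shows "integral_ideal d X"
  unfolding integral_ideal_def frac_ideal_def
proof (intro conjI)
  show "X \<subseteq> Kfield d" using assms(1) OK_Kfield by blast
  show "0 \<in> X" using assms(2) by (simp add: OKmod_def)
  show "X \<noteq> {0}" using assms(3,4) by blast
  show "\<forall>x\<in>X. \<forall>y\<in>X. x + y \<in> X" using assms(2) by (simp add: OKmod_def)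
  show "\<forall>r\<in>OK d. \<forall>x\<in>X. r * x \<in> X" using assms(2) by (simp add: OKmod_def)
  show "\<exists>c\<in>OK d. c \<noteq> 0 \<and> (\<forall>x\<in>X. c * x \<in> OK d)"
    using OK_one assms(1) by (intro bexI[of _ 1]) auto
  show "X \<subseteq> OK d" by (rule assms(1))
qed

lemma coprime_add:
  assumes "X \<subseteq> OK d" "OKmod d X" "of_int a \<in> X" "gcd (int N) a = 1" "modc d"
  shows "ideal_add X (modulus_ideal d N) = OK d"
proof (intro set_eqI iffI)
  have d0: "d \<le> 0" "d mod 4 = 0 \<or> d mod 4 = 1" using assms(5) by (auto simp: modc_def)
  fix x assume "x \<in> ideal_add X (modulus_ideal d N)"
  then obtain y z where "x = y + of_nat N * z" "y \<in> X" "z \<in> OK d"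
    unfolding ideal_add_def modulus_ideal_def by blast
  moreover have "of_nat N * z \<in> OK d" using OK_mult_int[OF \<open>z \<in> OK d\<close>, of "int N"] by simp
  ultimately show "x \<in> OK d" using assms(1) OK_add by blast
next
  have d0: "d \<le> 0" "d mod 4 = 0 \<or> d mod 4 = 1" using assms(5) by (auto simp: modc_def)
  fix x assume x: "x \<in> OK d"
  obtain u v where uv: "u * int N + v * a = 1" using bezout_int[of "int N" a] assms(4) by auto
  have "x = (x * of_int v) * of_int a + of_nat N * (x * of_int u)"
  proof -
    have "(of_int (u * int N + v * a) :: complex) = 1" using uv by simp
    hence "of_int u * of_nat N + of_int v * of_int a = (1::complex)" by simp
    hence "x = x * (of_int u * of_nat N + of_int v * of_int a)" by simp
    thus ?thesis by (simp add: algebra_simps)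
  qed
  moreover have "(x * of_int v) * of_int a \<in> X"
  proof -
    have r: "x * of_int v \<in> OK d" using OK_mult_int[OF x, of v] by (simp add: mult.commute)
    thus ?thesis using assms(2,3) unfolding OKmod_def by blast
  qed
  moreover have "of_nat N * (x * of_int u) \<in> modulus_ideal d N"
    unfolding modulus_ideal_def using OK_mult_int[OF x, of u] by (auto simp: mult.commute)
  ultimately show "x \<in> ideal_add X (modulus_ideal d N)" unfolding ideal_add_def by blast
qed

lemma lat_IK:
  assumes "(a,b,c) \<in> QformsN d N" "modc d"
  shows "lattice1 (omegaQ d (a,b,c)) \<in> IK d N"
proof -
  have Q: "(a,b,c) \<in> Qforms d" and gN: "gcd (int N) a = 1" using assms(1) by (auto simp: QformsN_def)
  have a0: "a > 0" using Q by (simp add: Qforms_mem)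
  have d0: "d < 0" "d \<le> 0" "d mod 4 = 0 \<or> d mod 4 = 1" using assms(2) by (auto simp: modc_def)
  define w where "w = omegaQ d (a,b,c)"
  define L where "L = lattice1 w"
  have Lm: "OKmod d L" unfolding L_def w_def using lat_OKmod[OF Q d0(1)] .
  have aL: "of_int a * x \<in> OK d" if xL: "x \<in> L" for x
  proof -
    obtain m n where x: "x = of_int m * w + of_int n" using xL unfolding L_def lat_mem by blast
    have "of_int a * x = of_int m * (of_int a * w + of_int ((b + d) div 2)) + of_int (a * n - m * ((b + d) div 2))"
      unfolding x by (simp add: algebra_simps)
    also have "\<dots> = of_int (a * n - m * ((b + d) div 2)) + of_int m * theta d"
      using theta_om[OF Q] unfolding w_def by simp
    finally have e: "of_int a * x = of_int (a * n - m * ((b + d) div 2)) + of_int m * theta d" .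
    show ?thesis unfolding OK_mem e by (intro exI) (rule refl)
  qed
  have fL: "frac_ideal d L"
    unfolding frac_ideal_def
  proof (intro conjI)
    show "L \<subseteq> Kfield d" unfolding L_def w_def by (rule lat_Kfield)
    show "0 \<in> L" using Lm by (simp add: OKmod_def)
    show "L \<noteq> {0}"
    proof
      assume "L = {0}"
      moreover have "1 \<in> L" using lat_one[of w] unfolding L_def .
      ultimately show False by simp
    qed
    show "\<forall>x\<in>L. \<forall>y\<in>L. x + y \<in> L" using Lm by (simp add: OKmod_def)
    show "\<forall>r\<in>OK d. \<forall>x\<in>L. r * x \<in> L" using Lm by (simp add: OKmod_def)
    show "\<exists>c\<in>OK d. c \<noteq> 0 \<and> (\<forall>x\<in>L. c * x \<in> OK d)"
      using aL OK_int[of a d] a0 by (intro bexI[of _ "of_int a"] conjI) auto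
  qed
  define C where "C = principal_ideal d (of_int a)"
  have Cc: "C = cm (of_int a) (OK d)" unfolding C_def principal_cm ..
  have CM: "OKmod d C" unfolding Cc using OKmod_cm OKmod_OK assms(2) by blast
  have CO: "C \<subseteq> OK d" unfolding Cc cm_def using OK_mult_int by blast
  have aC: "of_int a \<in> C" unfolding Cc cm_def using OK_one by (intro CollectI exI[of _ 1]) simp
  have B: "ideal_mult L C = cm (of_int a) L" unfolding C_def ideal_mult_comm[of L]
    using ideal_mult_principal[OF Lm] .
  have BM: "OKmod d (cm (of_int a) L)" using OKmod_cm Lm by blast
  have BO: "cm (of_int a) L \<subseteq> OK d" unfolding cm_def using aL by blast
  have aB: "of_int a \<in> cm (of_int a) L" unfolding cm_def using lat_one[of w] unfolding L_def by (intro CollectI exI[of _ 1]) simp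
  have c1: "integral_coprime d N C"
    unfolding integral_coprime_def using integral_intro[OF CO CM aC] coprime_add[OF CO CM aC gN assms(2)] a0 by simp
  have c2: "integral_coprime d N (cm (of_int a) L)"
    unfolding integral_coprime_def using integral_intro[OF BO BM aB] coprime_add[OF BO BM aB gN assms(2)] a0 by simp
  show ?thesis unfolding IK_def L_def[symmetric] w_def[symmetric] mem_Collect_eq
    using fL c1 c2 B by blast
qed

lemma fd_modc: "fund_disc_neg d \<Longrightarrow> modc d"
  unfolding fund_disc_neg_def modc_def by auto

lemma om_Im_gen: "Q \<in> Qforms d \<Longrightarrow> d < 0 \<Longrightarrow> Im (omegaQ d Q) > 0"
  using om_Im by (cases Q) blast

lemma principal_eq_gen:
  assumes "Q \<in> Qforms d" "modc d" "v \<noteq> 0" "mu \<noteq> 0"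
    "cm v (lattice1 (omegaQ d Q)) = cm mu (lattice1 (omegaQ d Q))"
  shows "principal_ideal d v = principal_ideal d mu"
  using principal_eq assms by (cases Q) blast

lemma K1:
  assumes "Q \<in> Qforms d" "d < 0" "\<delta> \<in> SL2Z"
  shows "lattice1 (omegaQ d Q) = cm (jfac \<delta> (omegaQ d Q)) (lattice1 (omegaQ d (qform_act Q (mat_inv \<delta>))))"
proof -
  have "omegaQ d (qform_act Q (mat_inv \<delta>)) = moebius \<delta> (omegaQ d Q)"
    using qact_omega[OF assms(1,2) mat_inv_SL[OF assms(3)]] by (simp add: mat_inv_inv)
  moreover have "Im (omegaQ d Q) \<noteq> 0" using om_Im_gen[OF assms(1,2)] by simp
  ultimately show ?thesis using lat_transform[OF assms(3)] by simp
qed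

lemma PK_principal:
  assumes "C \<in> PK d N" obtains v where "C = principal_ideal d v" "v \<noteq> 0"
  using assms unfolding PK_def by blast

lemma K2:
  assumes "Q \<in> Qforms d" "modc d" "\<delta> \<in> SL2Z" "Q2 = qform_act Q (mat_inv \<delta>)" "P \<subseteq> PK d N"
  shows "same_class P (lattice1 (omegaQ d Q)) (lattice1 (omegaQ d Q2)) \<longleftrightarrow> principal_ideal d (jfac \<delta> (omegaQ d Q)) \<in> P"
proof -
  have d0: "d < 0" using assms(2) by (simp add: modc_def)
  have Q2: "Q2 \<in> Qforms d" using qact_Qforms[OF assms(1) d0 mat_inv_SL[OF assms(3)]] assms(4) by simp
  define j where "j = jfac \<delta> (omegaQ d Q)"
  have j0: "j \<noteq> 0" unfolding j_def using jfac_nz'[OF assms(3)] om_Im_gen[OF assms(1) d0] by simp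
  have L: "lattice1 (omegaQ d Q) = cm j (lattice1 (omegaQ d Q2))" unfolding j_def assms(4) using K1[OF assms(1) d0 assms(3)] .
  have M2: "OKmod d (lattice1 (omegaQ d Q2))" using lat_OKmod[OF Q2 d0] .
  show ?thesis unfolding j_def[symmetric]
  proof
    assume "same_class P (lattice1 (omegaQ d Q)) (lattice1 (omegaQ d Q2))"
    then obtain C where C: "C \<in> P" "lattice1 (omegaQ d Q) = ideal_mult C (lattice1 (omegaQ d Q2))"
      unfolding same_class_def by blast
    obtain v where v: "C = principal_ideal d v" "v \<noteq> 0" using C(1) assms(5) PK_principal by blast
    have "cm v (lattice1 (omegaQ d Q2)) = cm j (lattice1 (omegaQ d Q2))"
      using C(2) L ideal_mult_principal[OF M2, of v] v(1) by simp
    hence "principal_ideal d v = principal_ideal d j" using principal_eq_gen[OF Q2 assms(2) v(2) j0] by simp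
    thus "principal_ideal d j \<in> P" using C(1) v(1) by simp
  next
    assume "principal_ideal d j \<in> P"
    moreover have "lattice1 (omegaQ d Q) = ideal_mult (principal_ideal d j) (lattice1 (omegaQ d Q2))"
      using L ideal_mult_principal[OF M2, of j] by simp
    ultimately show "same_class P (lattice1 (omegaQ d Q)) (lattice1 (omegaQ d Q2))"
      unfolding same_class_def by blast
  qed
qed

lemma K3:
  assumes "Q \<in> Qforms d" "d < 0" "\<delta> \<in> SL2Z" "Q2 = qform_act Q (mat_inv \<delta>)" "SL2_subgroup G"
  shows "\<delta> \<in> set_mult G (isotropy (omegaQ d Q)) \<longleftrightarrow> (\<exists>g\<in>G. Q2 = qform_act Q g)"
proof -
  have GS: "G \<subseteq> SL2Z" and Ginv: "\<forall>x\<in>G. mat_inv x \<in> G" using assms(5) by (auto simp: SL2_subgroup_def)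
  define w where "w = omegaQ d Q"
  have wI: "Im w \<noteq> 0" using om_Im_gen[OF assms(1,2)] unfolding w_def by simp
  have Q2: "Q2 \<in> Qforms d" using qact_Qforms[OF assms(1,2) mat_inv_SL[OF assms(3)]] assms(4) by simp
  have w2: "omegaQ d Q2 = moebius \<delta> w"
    using qact_omega[OF assms(1,2) mat_inv_SL[OF assms(3)]] assms(4) unfolding w_def by (simp add: mat_inv_inv)
  show ?thesis
  proof
    assume "\<delta> \<in> set_mult G (isotropy (omegaQ d Q))"
    then obtain g h where gh: "\<delta> = mat_mult g h" "g \<in> G" "h \<in> SL2Z" "moebius h w = w"
      unfolding set_mult_def isotropy_def w_def by blast
    have gS: "g \<in> SL2Z" using gh(2) GS by blast
    have "moebius \<delta> w = moebius g w" using moebius_mult[OF gS gh(3) wI] gh by simp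
    moreover have "omegaQ d (qform_act Q (mat_inv g)) = moebius g w"
      using qact_omega[OF assms(1,2) mat_inv_SL[OF gS]] unfolding w_def by (simp add: mat_inv_inv)
    ultimately have "omegaQ d (qform_act Q (mat_inv g)) = omegaQ d Q2" using w2 by simp
    hence "qform_act Q (mat_inv g) = Q2"
      using form_unique[OF qact_Qforms[OF assms(1,2) mat_inv_SL[OF gS]] Q2 assms(2)] by simp
    thus "\<exists>g\<in>G. Q2 = qform_act Q g" using Ginv gh(2) by metis
  next
    assume "\<exists>g\<in>G. Q2 = qform_act Q g"
    then obtain g where g: "g \<in> G" "Q2 = qform_act Q g" by blast
    have gS: "g \<in> SL2Z" using g(1) GS by blast
    have "omegaQ d Q2 = moebius (mat_inv g) w" using qact_omega[OF assms(1,2) gS] g(2) unfolding w_def by simp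
    hence e: "moebius \<delta> w = moebius (mat_inv g) w" using w2 by simp
    define h where "h = mat_mult g \<delta>"
    have hS: "h \<in> SL2Z" unfolding h_def using mat_mult_SL gS assms(3) by blast
    have "moebius h w = moebius g (moebius \<delta> w)" unfolding h_def using moebius_mult[OF gS assms(3) wI] .
    also have "\<dots> = w" unfolding e using moebius_inv'[OF gS wI] .
    finally have hw: "moebius h w = w" .
    have "\<delta> = mat_mult (mat_inv g) h" unfolding h_def using mat_cancel[OF gS] by simp
    moreover have "mat_inv g \<in> G" using Ginv g(1) by blast
    ultimately show "\<delta> \<in> set_mult G (isotropy (omegaQ d Q))"
      unfolding set_mult_def isotropy_def w_def[symmetric] using hS hw by blast
  qed
qed

lemma Im_moebius_gen:
  "Im (moebius (p,q,r,s) t) = real_of_int (p * s - q * r) * Im t / ((Re (of_int r * t + of_int s))^2 + (Im (of_int r * t + of_int s))^2)"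
proof -
  have e: "real_of_int p * Im t * (real_of_int r * Re t + real_of_int s) - (real_of_int p * Re t + real_of_int q) * (real_of_int r * Im t)
        = real_of_int (p * s - q * r) * Im t" by (simp add: algebra_simps)
  show ?thesis unfolding moebius_eq Im_divide using e by (simp add: power2_eq_square)
qed

lemma K4:
  assumes "Q \<in> Qforms d" "Q' \<in> Qforms d" "d < 0"
    "lattice1 (omegaQ d Q) = cm v (lattice1 (omegaQ d Q'))"
  shows "\<exists>\<gamma>\<in>SL2Z. Q' = qform_act Q \<gamma>"
proof -
  define w where "w = omegaQ d Q"
  define w' where "w' = omegaQ d Q'"
  have wI: "Im w > 0" "Im w' > 0" using om_Im_gen assms unfolding w_def w'_def by blast+
  have wne: "Im w \<noteq> 0" using wI by simp
  have L: "lattice1 w = cm v (lattice1 w')" using assms(4) unfolding w_def w'_def .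
  obtain p q where pq: "w = v * (of_int p * w' + of_int q)"
    using lat_w[of w] unfolding L cm_def lat_mem by blast
  obtain r s where rs: "1 = v * (of_int r * w' + of_int s)"
    using lat_one[of w] unfolding L cm_def lat_mem by blast
  have "v * w' \<in> lattice1 w" unfolding L cm_def using lat_w[of w'] by blast
  then obtain p' q' where pq': "v * w' = of_int p' * w + of_int q'" unfolding lat_mem by blast
  have "v * 1 \<in> lattice1 w" unfolding L cm_def using lat_one[of w'] by blast
  then obtain r' s' where rs': "v = of_int r' * w + of_int s'" unfolding lat_mem by auto
  have "w = of_int p * (v * w') + of_int q * v" using pq by (simp add: algebra_simps)
  also have "\<dots> = of_int (p*p' + q*r') * w + of_int (p*q' + q * s')" unfolding pq' rs'[symmetric]
    unfolding rs' by (simp add: algebra_simps)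
  finally have "of_int 1 * w + of_int 0 = of_int (p*p' + q*r') * w + of_int (p*q' + q * s')" by simp
  from lin_indep_int2[OF wne this] have e1: "p*p' + q*r' = 1" "p*q' + q * s' = 0" by simp_all
  have "(1::complex) = of_int r * (v * w') + of_int s * v" using rs by (simp add: algebra_simps)
  also have "\<dots> = of_int (r*p' + s * r') * w + of_int (r*q' + s * s')" unfolding pq' unfolding rs' by (simp add: algebra_simps)
  finally have "of_int 0 * w + of_int 1 = of_int (r*p' + s * r') * w + of_int (r*q' + s * s')" by simp
  from lin_indep_int2[OF wne this] have e2: "r*p' + s * r' = 0" "r*q' + s * s' = 1" by simp_all
  have "(p * s - q * r) * (p' * s' - q' * r') = (p*p' + q*r') * (r*q' + s * s') - (p*q' + q * s') * (r*p' + s * r')"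
    by (simp add: algebra_simps)
  hence "(p * s - q * r) * (p' * s' - q' * r') = 1" using e1 e2 by simp
  hence dt: "p * s - q * r = 1 \<or> p * s - q * r = -1" using pos_zmult_eq_1_iff_lemma by blast
  have J: "of_int r * w' + of_int s \<noteq> 0" using rs by auto
  have wm: "w = moebius (p,q,r,s) w'" unfolding moebius_eq using pq rs J
    by (metis nonzero_mult_div_cancel_left mult_1_right divide_divide_eq_right divide_self_if mult.commute)
  have "(Re (of_int r * w' + of_int s))^2 + (Im (of_int r * w' + of_int s))^2 > 0"
    using J by (metis complex_eq_0 add_pos_nonneg add_nonneg_pos less_eq_real_def not_less zero_le_power2 power2_less_eq_zero_iff)
  moreover have "Im w = real_of_int (p * s - q * r) * Im w' / ((Re (of_int r * w' + of_int s))^2 + (Im (of_int r * w' + of_int s))^2)"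
    unfolding wm Im_moebius_gen ..
  ultimately have "real_of_int (p * s - q * r) * Im w' > 0" using wI(1)
    by (metis zero_less_divide_iff less_asym)
  hence "real_of_int (p * s - q * r) > 0" using wI(2) zero_less_mult_iff by (metis less_asym)
  hence "p * s - q * r > 0" by (simp only: of_int_0_less_iff)
  hence "p * s - q * r = 1" using dt by linarith
  hence gS: "(p,q,r,s) \<in> SL2Z" by (simp add: SL2Z_mem)
  have "omegaQ d (qform_act Q (p,q,r,s)) = moebius (mat_inv (p,q,r,s)) w"
    using qact_omega[OF assms(1,3) gS] unfolding w_def .
  also have "\<dots> = w'" unfolding wm using moebius_inv[OF gS] wI(2) by simp
  finally have "qform_act Q (p,q,r,s) = Q'"
    using form_unique[OF qact_Qforms[OF assms(1,3) gS] assms(2,3)] unfolding w'_def by simp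
  thus ?thesis using gS by blast
qed

lemma QN_sub: "Q \<in> QformsN d N \<Longrightarrow> Q \<in> Qforms d"
  by (auto simp: QformsN_def)

theorem proposition2p4:
  fixes d :: int and N :: nat and P :: "complex set set" and \<Gamma> :: "mat2 set"
  assumes "fund_disc_neg d"
    and "N > 0"
    and "ideal_subgroup d N P"
    and "PK1 d N \<subseteq> P"
    and "P \<subseteq> PK d N"
    and "SL2_subgroup \<Gamma>"
  shows "(phi_well_defined d N P \<Gamma> \<and> phi_injective d N P \<Gamma>) \<longleftrightarrow> property_P d N P \<Gamma>"
proof -
  have md: "modc d" using fd_modc assms(1) .
  have d0: "d < 0" using md by (simp add: modc_def)
  have GS: "\<Gamma> \<subseteq> SL2Z" and Ginv: "\<forall>x\<in>\<Gamma>. mat_inv x \<in> \<Gamma>" using assms(6) by (auto simp: SL2_subgroup_def)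
  show ?thesis
  proof
    assume A: "phi_well_defined d N P \<Gamma> \<and> phi_injective d N P \<Gamma>"
    show "property_P d N P \<Gamma>" unfolding property_P_def
    proof (intro ballI impI)
      fix Q \<gamma> assume Q: "Q \<in> QformsN d N" and g: "\<gamma> \<in> SL2Z" and Q2N: "qform_act Q (mat_inv \<gamma>) \<in> QformsN d N"
      define Q2 where "Q2 = qform_act Q (mat_inv \<gamma>)"
      have QF: "Q \<in> Qforms d" using QN_sub Q by blast
      have k2: "same_class P (lattice1 (omegaQ d Q)) (lattice1 (omegaQ d Q2)) \<longleftrightarrow> principal_ideal d (jfac \<gamma> (omegaQ d Q)) \<in> P"
        using K2[OF QF md g Q2_def assms(5)] .
      have k3: "\<gamma> \<in> set_mult \<Gamma> (isotropy (omegaQ d Q)) \<longleftrightarrow> (\<exists>g\<in>\<Gamma>. Q2 = qform_act Q g)"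
        using K3[OF QF d0 g Q2_def assms(6)] .
      have fe: "form_equiv d N \<Gamma> Q Q2 \<longleftrightarrow> (\<exists>g\<in>\<Gamma>. Q2 = qform_act Q g)"
        using Q Q2N unfolding form_equiv_def Q2_def by blast
      have "same_class P (lattice1 (omegaQ d Q)) (lattice1 (omegaQ d Q2)) \<longleftrightarrow> form_equiv d N \<Gamma> Q Q2"
        using A Q Q2N unfolding phi_well_defined_def phi_injective_def Q2_def by blast
      thus "principal_ideal d (jfac \<gamma> (omegaQ d Q)) \<in> P \<longleftrightarrow> \<gamma> \<in> set_mult \<Gamma> (isotropy (omegaQ d Q))"
        using k2 k3 fe by blast
    qed
  next
    assume B: "property_P d N P \<Gamma>"
    have wd: "phi_well_defined d N P \<Gamma>" unfolding phi_well_defined_def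
    proof (intro conjI ballI allI impI)
      fix Q assume "Q \<in> QformsN d N"
      thus "lattice1 (omegaQ d Q) \<in> IK d N" using lat_IK md by (cases Q) blast
    next
      fix Q Q' assume fe: "form_equiv d N \<Gamma> Q Q'"
      then obtain g where g: "g \<in> \<Gamma>" "Q' = qform_act Q g" and Q: "Q \<in> QformsN d N" and Q': "Q' \<in> QformsN d N"
        unfolding form_equiv_def by blast
      have QF: "Q \<in> Qforms d" using QN_sub Q by blast
      define \<delta> where "\<delta> = mat_inv g"
      have dS: "\<delta> \<in> SL2Z" unfolding \<delta>_def using mat_inv_SL g(1) GS by blast
      have Q2: "Q' = qform_act Q (mat_inv \<delta>)" unfolding \<delta>_def mat_inv_inv using g(2) .
      have "\<delta> \<in> set_mult \<Gamma> (isotropy (omegaQ d Q))" using K3[OF QF d0 dS Q2 assms(6)] g by blast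
      hence "principal_ideal d (jfac \<delta> (omegaQ d Q)) \<in> P"
        using B Q dS Q' Q2 unfolding property_P_def by blast
      thus "same_class P (lattice1 (omegaQ d Q)) (lattice1 (omegaQ d Q'))"
        using K2[OF QF md dS Q2 assms(5)] by blast
    qed
    have inj: "phi_injective d N P \<Gamma>" unfolding phi_injective_def
    proof (intro ballI impI)
      fix Q Q' assume Q: "Q \<in> QformsN d N" and Q': "Q' \<in> QformsN d N"
        and sc: "same_class P (lattice1 (omegaQ d Q)) (lattice1 (omegaQ d Q'))"
      have QF: "Q \<in> Qforms d" using QN_sub Q by blast
      have QF': "Q' \<in> Qforms d" using QN_sub Q' by blast
      obtain C where C: "C \<in> P" "lattice1 (omegaQ d Q) = ideal_mult C (lattice1 (omegaQ d Q'))"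
        using sc unfolding same_class_def by blast
      obtain v where v: "C = principal_ideal d v" "v \<noteq> 0" using C(1) assms(5) PK_principal by blast
      have "lattice1 (omegaQ d Q) = cm v (lattice1 (omegaQ d Q'))"
        using C(2) v(1) ideal_mult_principal[OF lat_OKmod[OF QF' d0]] by simp
      then obtain \<gamma> where gS: "\<gamma> \<in> SL2Z" and gQ: "Q' = qform_act Q \<gamma>" using K4[OF QF QF' d0] by blast
      define \<delta> where "\<delta> = mat_inv \<gamma>"
      have dS: "\<delta> \<in> SL2Z" unfolding \<delta>_def using mat_inv_SL gS by blast
      have Q2: "Q' = qform_act Q (mat_inv \<delta>)" unfolding \<delta>_def mat_inv_inv using gQ .
      have "principal_ideal d (jfac \<delta> (omegaQ d Q)) \<in> P" using K2[OF QF md dS Q2 assms(5)] sc by blast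
      hence "\<delta> \<in> set_mult \<Gamma> (isotropy (omegaQ d Q))"
        using B Q dS Q' Q2 unfolding property_P_def by blast
      hence "\<exists>g\<in>\<Gamma>. Q' = qform_act Q g" using K3[OF QF d0 dS Q2 assms(6)] by blast
      thus "form_equiv d N \<Gamma> Q Q'" unfolding form_equiv_def using Q Q' by blast
    qed
    show "phi_well_defined d N P \<Gamma> \<and> phi_injective d N P \<Gamma>" using wd inj by blast
  qed
qed

end
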